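(* Let $n\geq l\geq 3$ be integers. If $G$ is an $n$-vertex unicyclic graph with girth $l$, then $$n(US_n^l)\geq n(G)\geq n(UP_n^l).$$
   Context: A unicyclic graph is a connected graph containing exactly one cycle; its girth is the length of that cycle. A subtree of a graph $G$ is a subgraph of $G$ that is a tree (subtrees are distinguished as subgraphs); $n(G)$ is the number of subtrees of $G$, counting also the empty subtree. $US_n^l$ is the graph obtained from the cycle $C_l$ by attaching $n-l$ pendent vertices to one vertex of the cycle. $UP_n^l$ is the graph obtained from $C_l$ by attaching a pendent path of length $n-l$ to one vertex of the cycle (i.e. identifying a cycle vertex with an end vertex of a path with $n-l$ edges whose other vertices are new). *)

theory Defs
  imports Main
begin

type_synonym 'a graph = "'a set \<times> 'a set set"

definition simple_graph :: "'a graph \<Rightarrow> bool" where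
  "simple_graph G \<longleftrightarrow> finite (fst G) \<and> (\<forall>e\<in>snd G. e \<subseteq> fst G \<and> card e = 2)"

definition adj :: "'a set set \<Rightarrow> 'a \<Rightarrow> 'a \<Rightarrow> bool" where
  "adj E u v \<longleftrightarrow> {u, v} \<in> E"

definition connected_graph :: "'a graph \<Rightarrow> bool" where
  "connected_graph G \<longleftrightarrow> (\<forall>u\<in>fst G. \<forall>v\<in>fst G. (adj (snd G))\<^sup>*\<^sup>* u v)"

definition cycle_edges :: "'a list \<Rightarrow> 'a set set" where
  "cycle_edges vs = {{vs ! i, vs ! ((i + 1) mod length vs)} | i. i < length vs}"

definition is_cycle :: "'a graph \<Rightarrow> 'a set set \<Rightarrow> bool" where
  "is_cycle G C \<longleftrightarrow> (\<exists>vs. distinct vs \<and> length vs \<ge> 3 \<and> set vs \<subseteq> fst G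
      \<and> C = cycle_edges vs \<and> C \<subseteq> snd G)"

definition acyclic_graph :: "'a graph \<Rightarrow> bool" where
  "acyclic_graph G \<longleftrightarrow> \<not> (\<exists>C. is_cycle G C)"

definition is_tree :: "'a graph \<Rightarrow> bool" where
  "is_tree G \<longleftrightarrow> fst G \<noteq> {} \<and> connected_graph G \<and> acyclic_graph G"

definition subgraph :: "'a graph \<Rightarrow> 'a graph \<Rightarrow> bool" where
  "subgraph H G \<longleftrightarrow> fst H \<subseteq> fst G \<and> snd H \<subseteq> snd G \<and> (\<forall>e\<in>snd H. e \<subseteq> fst H)"

text \<open>Number of subtrees of G, counting also the empty subtree.\<close>
definition num_subtrees :: "'a graph \<Rightarrow> nat" where
  "num_subtrees G = card {H. subgraph H G \<and> is_tree H} + 1"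

definition unicyclic :: "'a graph \<Rightarrow> bool" where
  "unicyclic G \<longleftrightarrow> simple_graph G \<and> connected_graph G \<and> (\<exists>!C. is_cycle G C)"

definition girth :: "'a graph \<Rightarrow> nat" where
  "girth G = (LEAST k. \<exists>C. is_cycle G C \<and> card C = k)"

definition cycle_graph_edges :: "nat \<Rightarrow> nat set set" where
  "cycle_graph_edges l = {{i, (i + 1) mod l} | i. i < l}"

text \<open>US_n^l: C_l with n-l pendent vertices l,...,n-1 attached to vertex 0.\<close>
definition US :: "nat \<Rightarrow> nat \<Rightarrow> nat graph" where
  "US n l = ({0..<n}, cycle_graph_edges l \<union> {{0, j} | j. l \<le> j \<and> j < n})"

text \<open>UP_n^l: C_l with a pendent path 0 - l - (l+1) - ... - (n-1) of length n-l.\<close>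
definition UP :: "nat \<Rightarrow> nat \<Rightarrow> nat graph" where
  "UP n l = ({0..<n}, cycle_graph_edges l \<union>
      {{if j = l then 0 else j - 1, j} | j. l \<le> j \<and> j < n})"

end

theory Submission
  imports Defs
begin

definition subtrees :: "'a graph \<Rightarrow> 'a graph set" where
  "subtrees G = {H. subgraph H G \<and> is_tree H}"
definition tc :: "'a graph \<Rightarrow> 'a \<Rightarrow> nat" where
  "tc G u = card {T \<in> subtrees G. u \<in> fst T}"
definition KK :: "'a graph \<Rightarrow> 'a \<Rightarrow> 'a \<Rightarrow> nat" where
  "KK G u w = card {T \<in> subtrees G. u \<in> fst T \<and> w \<in> fst T}"
definition del :: "'a graph \<Rightarrow> 'a \<Rightarrow> 'a graph" where
  "del G v = (fst G - {v}, {e \<in> snd G. v \<notin> e})"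
definition addleaf :: "'a graph \<Rightarrow> 'a \<Rightarrow> 'a \<Rightarrow> 'a graph" where
  "addleaf T v w = (insert v (fst T), insert {v,w} (snd T))"

lemma finite_subtrees:
  assumes "simple_graph G" shows "finite (subtrees G)"
proof -
  have fE: "finite (snd G)"
    using assms unfolding simple_graph_def
    by (meson Pow_iff finite_Pow_iff rev_finite_subset subsetI)
  have "subtrees G \<subseteq> Pow (fst G) \<times> Pow (snd G)"
    unfolding subtrees_def subgraph_def by auto
  moreover have "finite (Pow (fst G) \<times> Pow (snd G))"
    using assms fE unfolding simple_graph_def by auto
  ultimately show ?thesis by (rule finite_subset)
qed

lemma adj_sym: "adj E u v = adj E v u"
  unfolding adj_def by (simp add: insert_commute)

lemma rtc_sym: "(adj E)\<^sup>*\<^sup>* u v \<Longrightarrow> (adj E)\<^sup>*\<^sup>* v u"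
proof (induction rule: rtranclp_induct)
  case base then show ?case by simp
next
  case (step y z)
  then show ?case using adj_sym
    by (metis converse_rtranclp_into_rtranclp)
qed

lemma rtc_mono: assumes "E \<subseteq> E'" "(adj E)\<^sup>*\<^sup>* u v" shows "(adj E')\<^sup>*\<^sup>* u v"
proof -
  have "adj E \<le> adj E'" using assms(1) unfolding adj_def by auto
  then show ?thesis using assms(2) rtranclp_mono by (metis predicate2D)
qed

lemma cycle_edges_in:
  "i < length vs \<Longrightarrow> {vs!i, vs!((i+1) mod length vs)} \<in> cycle_edges vs"
  unfolding cycle_edges_def by auto

lemma Union_cycle_edges: "\<Union> (cycle_edges vs) \<subseteq> set vs"
  unfolding cycle_edges_def
  by auto (metis length_pos_if_in_set mod_less_divisor nth_mem)

lemma in_Union_cycle_edges: "x \<in> set vs \<Longrightarrow> x \<in> \<Union> (cycle_edges vs)"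
  unfolding cycle_edges_def
  by (auto simp: in_set_conv_nth)

lemma card_cycle_edges:
  assumes "distinct vs" "3 \<le> length vs"
  shows "card (cycle_edges vs) = length vs"
proof -
  let ?k = "length vs"
  let ?f = "\<lambda>i. {vs!i, vs!((i+1) mod ?k)}"
  have eq: "cycle_edges vs = ?f ` {..<?k}" unfolding cycle_edges_def by auto
  have "inj_on ?f {..<?k}"
  proof
    fix i j assume i: "i \<in> {..<?k}" and j: "j \<in> {..<?k}" and e: "?f i = ?f j"
    have k0: "0 < ?k" using assms(2) by linarith
    have i1: "(i+1) mod ?k < ?k" and j1: "(j+1) mod ?k < ?k" using k0 by (rule mod_less_divisor)+
    from e have "(vs!i = vs!j \<and> vs!((i+1) mod ?k) = vs!((j+1) mod ?k)) \<or>
                 (vs!i = vs!((j+1) mod ?k) \<and> vs!((i+1) mod ?k) = vs!j)"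
      by (auto simp: doubleton_eq_iff)
    then show "i = j"
    proof
      assume "vs!i = vs!j \<and> vs!((i+1) mod ?k) = vs!((j+1) mod ?k)"
      then show ?thesis using assms(1) i j by (metis nth_eq_iff_index_eq lessThan_iff)
    next
      assume h: "vs!i = vs!((j+1) mod ?k) \<and> vs!((i+1) mod ?k) = vs!j"
      have a: "i = (j+1) mod ?k" using h assms i j1 by (simp add: nth_eq_iff_index_eq)
      have b: "j = (i+1) mod ?k" using h assms j i1 by (simp add: nth_eq_iff_index_eq)
      have "i = (i + 2) mod ?k" using a b by (simp add: mod_Suc_eq)
      then have "(i + 2) mod ?k = i mod ?k" using i by simp
      then have "?k dvd 2"
        by (metis add.commute add_diff_cancel_right' mod_eq_dvd_iff_nat le_add2)
      then show ?thesis using assms by (simp add: nat_dvd_not_less)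
    qed
  qed
  then show ?thesis using eq by (simp add: card_image)
qed

lemma cons_edge: "Suc i < length vs \<Longrightarrow> {vs!i, vs!Suc i} \<in> cycle_edges vs"
  using cycle_edges_in[of i vs] by simp

lemma last_edge: "vs \<noteq> [] \<Longrightarrow> {vs!(length vs - 1), vs!0} \<in> cycle_edges vs"
  using cycle_edges_in[of "length vs - 1" vs] by simp

lemma cyc_rot_sub: "cycle_edges (rotate r vs) \<subseteq> cycle_edges vs"
proof
  fix x assume "x \<in> cycle_edges (rotate r vs)"
  then obtain i where i: "i < length vs"
    and x: "x = {rotate r vs ! i, rotate r vs ! ((i+1) mod length vs)}"
    unfolding cycle_edges_def by auto
  let ?k = "length vs"
  have k0: "0 < ?k" using i by linarith
  have "rotate r vs ! i = vs ! ((r+i) mod ?k)" using i by (simp add: nth_rotate)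
  moreover have "rotate r vs ! ((i+1) mod ?k) = vs ! ((r + (i+1) mod ?k) mod ?k)"
    using k0 by (simp add: nth_rotate)
  moreover have "(r + (i+1) mod ?k) mod ?k = ((r+i) mod ?k + 1) mod ?k"
    by (simp add: mod_add_right_eq mod_Suc_eq)
  ultimately have "x = {vs ! ((r+i) mod ?k), vs ! (((r+i) mod ?k + 1) mod ?k)}"
    using x by simp
  then show "x \<in> cycle_edges vs" using cycle_edges_in[of "(r+i) mod ?k" vs] k0 by simp
qed

lemma cyc_rot: "cycle_edges (rotate r vs) = cycle_edges vs"
proof (cases "vs = []")
  case True then show ?thesis by simp
next
  case False
  let ?k = "length vs"
  have "rotate (?k - r mod ?k) (rotate r vs) = rotate (?k - r mod ?k + r) vs"
    by (simp add: rotate_rotate)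
  also have "\<dots> = vs"
  proof (rule rotate_id)
    have "?k - r mod ?k + r = ?k * (1 + r div ?k)"
    proof -
      have "r mod ?k \<le> ?k" using False by simp
      moreover have "r = ?k * (r div ?k) + r mod ?k" by simp
      moreover have "?k * (1 + r div ?k) = ?k + ?k * (r div ?k)" by (simp add: distrib_left)
      ultimately show ?thesis by linarith
    qed
    then show "(?k - r mod ?k + r) mod ?k = 0" by simp
  qed
  finally have "cycle_edges vs \<subseteq> cycle_edges (rotate r vs)"
    using cyc_rot_sub[of "?k - r mod ?k" "rotate r vs"] by simp
  then show ?thesis using cyc_rot_sub by blast
qed

lemma rotate_to_front:
  assumes "x \<in> set vs"
  shows "\<exists>R. (distinct R = distinct vs) \<and> set R = set vs \<and> length R = length vs
     \<and> cycle_edges R = cycle_edges vs \<and> R!0 = x"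
proof -
  obtain i where i: "i < length vs" "vs ! i = x" using assms by (auto simp: in_set_conv_nth)
  have "0 < length vs" using i by linarith
  then have "rotate i vs ! 0 = vs ! ((i + 0) mod length vs)" by (rule nth_rotate)
  then have "rotate i vs ! 0 = vs ! i" using i(1) by simp
  then have "rotate i vs ! 0 = x" using i(2) by (rule trans)
  then show ?thesis using cyc_rot[of i vs] by (intro exI[of _ "rotate i vs"]) simp
qed

lemma cycle_from_list:
  assumes "distinct L" "3 \<le> length L" "set L \<subseteq> fst G"
    "\<forall>i. Suc i < length L \<longrightarrow> {L!i, L!Suc i} \<in> snd G" "{last L, hd L} \<in> snd G"
  shows "is_cycle G (cycle_edges L)"
proof -
  have "cycle_edges L \<subseteq> snd G"
  proof
    fix x assume "x \<in> cycle_edges L"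
    then obtain i where i: "i < length L" and x: "x = {L!i, L!((i+1) mod length L)}"
      unfolding cycle_edges_def by auto
    show "x \<in> snd G"
    proof (cases "Suc i < length L")
      case True then show ?thesis using assms(4) x by simp
    next
      case False
      then have "i = length L - 1" using i by simp
      moreover have "L \<noteq> []" using i by auto
      ultimately have "x = {last L, hd L}" using x i
        by (simp add: last_conv_nth hd_conv_nth)
      then show ?thesis using assms(5) by simp
    qed
  qed
  then show ?thesis unfolding is_cycle_def using assms by blast
qed

lemma cycle_two_nbrs:
  assumes "distinct vs" "3 \<le> length vs" "cycle_edges vs \<subseteq> E" "x \<in> set vs"
    "\<forall>e\<in>E. x \<in> e \<longrightarrow> e = {x,w}"
  shows False
proof -
  obtain R where R: "distinct R" "length R = length vs" "cycle_edges R = cycle_edges vs" "R!0 = x"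
    using rotate_to_front[OF assms(4)] assms(1) by blast
  let ?k = "length R"
  have k3: "3 \<le> ?k" using R assms by simp
  have e1: "{R!0, R!1} \<in> E" using cons_edge[of 0 R] k3 R assms(3) by auto
  have Rne: "R \<noteq> []" using k3 by (cases R) auto
  have e2: "{R!(?k-1), R!0} \<in> E" using last_edge[OF Rne] R assms(3) by auto
  have l1: "1 < ?k" "0 < ?k" "?k - 1 < ?k" "?k - 1 \<noteq> 1" "?k - 1 \<noteq> 0" using k3 by linarith+
  have d1: "R!1 \<noteq> R!0" using nth_eq_iff_index_eq[OF R(1) l1(1) l1(2)] by simp
  have d2: "R!(?k-1) \<noteq> R!0" using nth_eq_iff_index_eq[OF R(1) l1(3) l1(2)] l1 by simp
  have d3: "R!(?k-1) \<noteq> R!1" using nth_eq_iff_index_eq[OF R(1) l1(3) l1(1)] l1 by simp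
  have "{R!0, R!1} = {x,w}" using e1 assms(5) R(4) by auto
  then have "R!1 = w" using d1 R(4) by (auto simp: doubleton_eq_iff)
  moreover have "{R!(?k-1), R!0} = {x,w}" using e2 assms(5) R(4) by auto
  then have "R!(?k-1) = w" using d2 R(4) by (auto simp: doubleton_eq_iff)
  ultimately show False using d3 by simp
qed

lemma single_tree: "is_tree ({v},{})"
  unfolding is_tree_def connected_graph_def acyclic_graph_def is_cycle_def
proof (intro conjI)
  show "\<not> (\<exists>C vs. distinct vs \<and> 3 \<le> length vs \<and> set vs \<subseteq> fst ({v}, {}) \<and> C = cycle_edges vs \<and> C \<subseteq> snd ({v}::'a set, {}))"
  proof
    assume "\<exists>C vs. distinct vs \<and> 3 \<le> length vs \<and> set vs \<subseteq> fst ({v}, {}) \<and> C = cycle_edges vs \<and> C \<subseteq> snd ({v}::'a set, {})"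
    then obtain vs where "distinct vs" "3 \<le> length vs" "set vs \<subseteq> {v}" by auto
    then have "length vs \<le> 1"
    proof -
      have "card (set vs) \<le> card {v}" using \<open>set vs \<subseteq> {v}\<close> by (intro card_mono) auto
      then show ?thesis using distinct_card[OF \<open>distinct vs\<close>] by simp
    qed
    then show False using \<open>3 \<le> length vs\<close> by simp
  qed
qed auto

definition isleaf :: "'a graph \<Rightarrow> 'a \<Rightarrow> 'a \<Rightarrow> bool" where
  "isleaf G v w \<longleftrightarrow> simple_graph G \<and> v \<in> fst G \<and> w \<noteq> v \<and> {e \<in> snd G. v \<in> e} = {{v,w}}"

lemma leaf_conn:
  assumes "(adj E)\<^sup>*\<^sup>* u z" "u \<noteq> v" "w \<noteq> v" "\<forall>e\<in>E. v \<in> e \<longrightarrow> e = {v,w}"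
  shows "(z \<noteq> v \<longrightarrow> (adj {e\<in>E. v \<notin> e})\<^sup>*\<^sup>* u z) \<and> (z = v \<longrightarrow> (adj {e\<in>E. v \<notin> e})\<^sup>*\<^sup>* u w)"
  using assms(1)
proof (induction rule: rtranclp_induct)
  case base then show ?case using assms(2) by simp
next
  case (step y z)
  have yz: "{y,z} \<in> E" using step(2) unfolding adj_def by simp
  show ?case
  proof (cases "z = v")
    case True
    then have "{y,v} = {v,w}" using yz assms(4) by auto
    then have "y = w" using assms(3) by (auto simp: doubleton_eq_iff)
    then show ?thesis using step(3) True assms(3) by auto
  next
    case False
    show ?thesis
    proof (cases "y = v")
      case True
      then have "{v,z} = {v,w}" using yz assms(4) by auto
      then have "z = w" using False by (auto simp: doubleton_eq_iff)
      then show ?thesis using step(3) True False by auto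
    next
      case yv: False
      then have "adj {e\<in>E. v \<notin> e} y z" using yz False unfolding adj_def by auto
      then show ?thesis using step(3) yv False by (meson rtranclp.rtrancl_into_rtrancl)
    qed
  qed
qed

lemma reach_edge:
  assumes "(adj E)\<^sup>*\<^sup>* y v" "y \<noteq> v" shows "\<exists>e\<in>E. v \<in> e"
  using assms
proof (induction rule: rtranclp_induct)
  case base then show ?case by simp
next
  case (step a b) then show ?case unfolding adj_def by blast
qed

lemma cycle_mono:
  assumes "is_cycle G1 C" "fst G1 \<subseteq> fst G2" "snd G1 \<subseteq> snd G2"
  shows "is_cycle G2 C"
proof -
  obtain vs where "distinct vs" "3 \<le> length vs" "set vs \<subseteq> fst G1" "C = cycle_edges vs" "C \<subseteq> snd G1"
    using assms(1) unfolding is_cycle_def by blast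
  then show ?thesis unfolding is_cycle_def using assms(2,3)
    by (intro exI[of _ vs]) (simp add: subset_trans[of _ "fst G1"] subset_trans[of _ "snd G1"])
qed

lemma sub_notin:
  assumes "v \<notin> fst H" shows "subgraph H G \<longleftrightarrow> subgraph H (del G v)"
  using assms unfolding subgraph_def del_def by auto

lemma subtrees_notin:
  "{H \<in> subtrees G. v \<notin> fst H} = subtrees (del G v)"
proof -
  have "subgraph H (del G v) \<Longrightarrow> v \<notin> fst H" for H
    unfolding subgraph_def del_def by auto
  then show ?thesis unfolding subtrees_def using sub_notin by (metis (no_types, lifting) mem_Collect_eq set_eqI)
qed

lemma addleaf_tree:
  assumes lf: "isleaf G v w" and T: "T \<in> subtrees (del G v)" and wT: "w \<in> fst T"
  shows "addleaf T v w \<in> subtrees G"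
proof -
  have sgT: "subgraph T (del G v)" and trT: "is_tree T" using T unfolding subtrees_def by auto
  have vT: "v \<notin> fst T" using sgT unfolding subgraph_def del_def by auto
  have vE: "\<forall>e\<in>snd T. v \<notin> e" using sgT unfolding subgraph_def del_def by auto
  have vw: "{v,w} \<in> snd G" using lf unfolding isleaf_def by auto
  let ?A = "addleaf T v w"
  have sub: "subgraph ?A G"
    using sgT vw lf wT unfolding subgraph_def del_def addleaf_def isleaf_def by auto
  have toW: "(adj (snd ?A))\<^sup>*\<^sup>* x w" if "x \<in> fst ?A" for x
  proof (cases "x = v")
    case True
    then have "adj (snd ?A) x w" unfolding adj_def addleaf_def by simp
    then show ?thesis by simp
  next
    case False
    then have "x \<in> fst T" using that unfolding addleaf_def by simp
    then have "(adj (snd T))\<^sup>*\<^sup>* x w" using trT wT unfolding is_tree_def connected_graph_def by blast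
    then show ?thesis by (rule rtc_mono[rotated]) (auto simp: addleaf_def)
  qed
  have conn: "connected_graph ?A"
    unfolding connected_graph_def
  proof (intro ballI)
    fix a b assume a: "a \<in> fst ?A" and b: "b \<in> fst ?A"
    have "(adj (snd ?A))\<^sup>*\<^sup>* a w" using toW[OF a] .
    moreover have "(adj (snd ?A))\<^sup>*\<^sup>* w b" using rtc_sym[OF toW[OF b]] .
    ultimately show "(adj (snd ?A))\<^sup>*\<^sup>* a b" by (rule rtranclp_trans)
  qed
  have acyc: "acyclic_graph ?A"
    unfolding acyclic_graph_def
  proof
    assume "\<exists>C. is_cycle ?A C"
    then obtain vs where vs: "distinct vs" "3 \<le> length vs" "set vs \<subseteq> fst ?A"
      "cycle_edges vs \<subseteq> snd ?A" unfolding is_cycle_def by blast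
    show False
    proof (cases "v \<in> set vs")
      case True
      have "\<forall>e\<in>snd ?A. v \<in> e \<longrightarrow> e = {v,w}" using vE unfolding addleaf_def by auto
      then show False using cycle_two_nbrs[OF vs(1,2,4) True] by blast
    next
      case False
      have "set vs \<subseteq> insert v (fst T)" using vs(3) by (simp add: addleaf_def)
      then have "set vs \<subseteq> fst T" using False by blast
      moreover have "cycle_edges vs \<subseteq> snd T"
      proof
        fix e assume e: "e \<in> cycle_edges vs"
        have "e \<subseteq> set vs" using Union_upper[OF e] Union_cycle_edges[of vs] by (rule subset_trans)
        then have "e \<noteq> {v,w}" using False by auto
        then show "e \<in> snd T" using e vs(4) unfolding addleaf_def by auto
      qed
      ultimately have "is_cycle T (cycle_edges vs)" unfolding is_cycle_def using vs by blast
      then show False using trT unfolding is_tree_def acyclic_graph_def by blast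
    qed
  qed
  show ?thesis using sub conn acyc unfolding subtrees_def is_tree_def addleaf_def by auto
qed

lemma remove_leaf_tree:
  assumes lf: "isleaf G v w" and H: "H \<in> subtrees G" and vH: "v \<in> fst H" and ne: "fst H \<noteq> {v}"
  shows "del H v \<in> subtrees (del G v) \<and> w \<in> fst (del H v) \<and> H = addleaf (del H v) v w"
proof -
  have sgH: "subgraph H G" and trH: "is_tree H" using H unfolding subtrees_def by auto
  have wv: "w \<noteq> v" using lf unfolding isleaf_def by auto
  have L: "{e \<in> snd G. v \<in> e} = {{v,w}}" using lf unfolding isleaf_def by simp
  have sH: "snd H \<subseteq> snd G" "\<forall>e\<in>snd H. e \<subseteq> fst H" using sgH unfolding subgraph_def by simp_all
  have vedge: "\<forall>e\<in>snd H. v \<in> e \<longrightarrow> e = {v,w}"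
  proof (intro ballI impI)
    fix e assume "e \<in> snd H" "v \<in> e"
    then have "e \<in> {e \<in> snd G. v \<in> e}" using sH by blast
    then show "e = {v,w}" using L by simp
  qed
  obtain y where y: "y \<in> fst H" "y \<noteq> v" using ne vH by blast
  have "(adj (snd H))\<^sup>*\<^sup>* y v" using trH y vH unfolding is_tree_def connected_graph_def by blast
  from reach_edge[OF this y(2)] obtain e where e: "e \<in> snd H" "v \<in> e" by blast
  then have "e = {v,w}" using vedge by blast
  then have vwH: "{v,w} \<in> snd H" using e(1) by simp
  then have "{v,w} \<subseteq> fst H" using sH(2) by blast
  then have wH: "w \<in> fst H" by simp
  have eqH: "H = addleaf (del H v) v w"
  proof -
    have A0: "insert v (fst H - {v}) = fst H" using vH by blast
    have A: "fst (addleaf (del H v) v w) = fst H" using A0 by (simp add: addleaf_def del_def)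
    have B0: "insert {v,w} {e \<in> snd H. v \<notin> e} = snd H"
    proof
      show "insert {v,w} {e \<in> snd H. v \<notin> e} \<subseteq> snd H" using vwH by blast
      show "snd H \<subseteq> insert {v,w} {e \<in> snd H. v \<notin> e}" using vedge by blast
    qed
    have B: "snd (addleaf (del H v) v w) = snd H" using B0 by (simp add: addleaf_def del_def)
    show ?thesis using A B by (simp add: prod_eq_iff)
  qed
  have conn: "connected_graph (del H v)"
    unfolding connected_graph_def
  proof (intro ballI)
    fix a b assume a: "a \<in> fst (del H v)" and b: "b \<in> fst (del H v)"
    have a1: "a \<in> fst H" "a \<noteq> v" using a by (auto simp: del_def)
    have b1: "b \<in> fst H" "b \<noteq> v" using b by (auto simp: del_def)
    have "(adj (snd H))\<^sup>*\<^sup>* a b" using trH a1 b1 unfolding is_tree_def connected_graph_def by blast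
    from leaf_conn[OF this a1(2) wv vedge] b1(2)
    have "(adj {e\<in>snd H. v \<notin> e})\<^sup>*\<^sup>* a b" by blast
    moreover have "snd (del H v) = {e\<in>snd H. v \<notin> e}" by (simp add: del_def)
    ultimately show "(adj (snd (del H v)))\<^sup>*\<^sup>* a b" by simp
  qed
  have acyc: "acyclic_graph (del H v)"
  proof -
    have "fst (del H v) \<subseteq> fst H" "snd (del H v) \<subseteq> snd H" by (auto simp: del_def)
    then show ?thesis using trH cycle_mono unfolding is_tree_def acyclic_graph_def by blast
  qed
  have sub: "subgraph (del H v) (del G v)" using sgH unfolding subgraph_def del_def by auto
  have "w \<in> fst (del H v)" using wH wv unfolding del_def by auto
  then show ?thesis using conn acyc sub eqH unfolding subtrees_def is_tree_def by auto
qed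

lemma del_addleaf:
  assumes "T \<in> subtrees (del G v)" shows "del (addleaf T v w) v = T"
proof -
  have sgT: "subgraph T (del G v)" using assms unfolding subtrees_def by auto
  have vT: "v \<notin> fst T" using sgT unfolding subgraph_def del_def by auto
  have vE: "\<forall>e\<in>snd T. v \<notin> e" using sgT unfolding subgraph_def del_def by auto
  have "fst (del (addleaf T v w) v) = fst T" using vT unfolding del_def addleaf_def by auto
  moreover have "snd (del (addleaf T v w) v) = snd T" using vE unfolding del_def addleaf_def by auto
  ultimately show ?thesis by (simp add: prod_eq_iff)
qed

lemma Sv_eq:
  assumes lf: "isleaf G v w"
  shows "{H \<in> subtrees G. v \<in> fst H \<and> P H} =
     (if P ({v},{}) then {({v},{})} else {}) \<union>
     (\<lambda>T. addleaf T v w) ` {T \<in> subtrees (del G v). w \<in> fst T \<and> P (addleaf T v w)}"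
    (is "?L = ?S \<union> ?I")
proof -
  have single: "({v},{}) \<in> subtrees G"
  proof -
    have "v \<in> fst G" using lf unfolding isleaf_def by simp
    then have "subgraph ({v},{}) G" unfolding subgraph_def by simp
    then show ?thesis using single_tree unfolding subtrees_def by simp
  qed
  have sg: "\<forall>e\<in>snd G. card e = 2" using lf unfolding isleaf_def simple_graph_def by simp
  have L1: "H \<in> ?S \<union> ?I" if h: "H \<in> ?L" for H
  proof -
    have hs: "H \<in> subtrees G" "v \<in> fst H" "P H" using h by simp_all
    have sgH: "subgraph H G" using hs(1) unfolding subtrees_def by simp
    have sH: "snd H \<subseteq> snd G" "\<forall>e\<in>snd H. e \<subseteq> fst H" using sgH unfolding subgraph_def by simp_all
    show ?thesis
    proof (cases "fst H = {v}")
      case True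
      have "snd H = {}"
      proof (rule equals0I)
        fix e assume e: "e \<in> snd H"
        then have "e \<subseteq> {v}" using sH(2) True by blast
        moreover have "card e = 2" using e sH(1) sg by blast
        moreover have "card e \<le> card {v}" using calculation(1) by (intro card_mono) auto
        ultimately show False by simp
      qed
      then have "H = ({v},{})" using True by (simp add: prod_eq_iff)
      then have "H \<in> ?S" using hs(3) by simp
      then show ?thesis by (rule UnI1)
    next
      case False
      have r: "del H v \<in> subtrees (del G v)" "w \<in> fst (del H v)" "H = addleaf (del H v) v w"
        using remove_leaf_tree[OF lf hs(1) hs(2) False] by blast+
      have "P (addleaf (del H v) v w)" using hs(3) r(3) by simp
      then have "del H v \<in> {T \<in> subtrees (del G v). w \<in> fst T \<and> P (addleaf T v w)}"
        using r(1,2) by simp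
      then have "H \<in> ?I" by (rule image_eqI[where f="\<lambda>T. addleaf T v w", OF r(3)])
      then show ?thesis by (rule UnI2)
    qed
  qed
  have L2: "H \<in> ?L" if h: "H \<in> ?S \<union> ?I" for H
    using h
  proof
    assume "H \<in> ?S"
    then have "H = ({v},{})" "P ({v},{})" by (simp_all split: if_splits)
    then show ?thesis using single by simp
  next
    assume "H \<in> ?I"
    then obtain T where T: "H = addleaf T v w" "T \<in> subtrees (del G v)" "w \<in> fst T" "P (addleaf T v w)"
      by blast
    have "addleaf T v w \<in> subtrees G" by (rule addleaf_tree[OF lf T(2) T(3)])
    moreover have "v \<in> fst (addleaf T v w)" by (simp add: addleaf_def)
    ultimately show ?thesis using T(1,4) by simp
  qed
  show ?thesis using L1 L2 by blast
qed

lemma card_Sv: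
  assumes lf: "isleaf G v w"
  shows "card {H \<in> subtrees G. v \<in> fst H \<and> P H} =
     (if P ({v},{}) then 1 else 0) +
     card {T \<in> subtrees (del G v). w \<in> fst T \<and> P (addleaf T v w)}"
proof -
  let ?W = "{T \<in> subtrees (del G v). w \<in> fst T \<and> P (addleaf T v w)}"
  have sgd: "simple_graph (del G v)" using lf unfolding isleaf_def simple_graph_def del_def by auto
  have fin: "finite ?W" using finite_subtrees[OF sgd] by simp
  have inj: "inj_on (\<lambda>T. addleaf T v w) ?W"
    by (rule inj_on_inverseI[of _ "\<lambda>H. del H v"]) (blast intro: del_addleaf)
  have disj: "({v},{}) \<notin> (\<lambda>T. addleaf T v w) ` ?W"
    using lf unfolding isleaf_def addleaf_def by auto
  show ?thesis
    unfolding Sv_eq[OF lf]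
    using fin inj disj by (auto simp: card_image)
qed

lemma simple_del: "simple_graph G \<Longrightarrow> simple_graph (del G v)"
  unfolding simple_graph_def del_def by auto

lemma count_all:
  assumes lf: "isleaf G v w"
  shows "card (subtrees G) = card (subtrees (del G v)) + 1 + tc (del G v) w"
proof -
  have sg: "simple_graph G" using lf unfolding isleaf_def by simp
  have fin: "finite (subtrees G)" by (rule finite_subtrees[OF sg])
  have split: "subtrees G = {H \<in> subtrees G. v \<notin> fst H} \<union> {H \<in> subtrees G. v \<in> fst H \<and> True}"
    by blast
  have "card (subtrees G) = card {H \<in> subtrees G. v \<notin> fst H} + card {H \<in> subtrees G. v \<in> fst H \<and> True}"
    by (subst split, rule card_Un_disjoint) (use fin in auto)
  also have "\<dots> = card (subtrees (del G v)) + (1 + card {T \<in> subtrees (del G v). w \<in> fst T \<and> True})"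
    using subtrees_notin[of G v] card_Sv[OF lf, of "\<lambda>_. True"] by simp
  finally show ?thesis unfolding tc_def by simp
qed

lemma count_leaf:
  assumes lf: "isleaf G v w"
  shows "tc G v = 1 + tc (del G v) w"
proof -
  have "tc G v = card {H \<in> subtrees G. v \<in> fst H \<and> True}" unfolding tc_def by simp
  also have "\<dots> = 1 + card {T \<in> subtrees (del G v). w \<in> fst T \<and> True}"
    using card_Sv[OF lf, of "\<lambda>_. True"] by simp
  finally show ?thesis unfolding tc_def by simp
qed

lemma count_other:
  assumes lf: "isleaf G v w" and uv: "u \<noteq> v"
  shows "tc G u = tc (del G v) u + KK (del G v) u w"
proof -
  have sg: "simple_graph G" using lf unfolding isleaf_def by simp
  have fin: "finite (subtrees G)" by (rule finite_subtrees[OF sg])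
  have split: "{H \<in> subtrees G. u \<in> fst H} = {H \<in> {H \<in> subtrees G. v \<notin> fst H}. u \<in> fst H}
      \<union> {H \<in> subtrees G. v \<in> fst H \<and> u \<in> fst H}"
    by blast
  have "tc G u = card {H \<in> {H \<in> subtrees G. v \<notin> fst H}. u \<in> fst H}
      + card {H \<in> subtrees G. v \<in> fst H \<and> u \<in> fst H}"
    unfolding tc_def by (subst split, rule card_Un_disjoint) (use fin in auto)
  also have "{H \<in> {H \<in> subtrees G. v \<notin> fst H}. u \<in> fst H} = {H \<in> subtrees (del G v). u \<in> fst H}"
    using subtrees_notin[of G v] by simp
  also have "card {H \<in> subtrees G. v \<in> fst H \<and> u \<in> fst H}
     = card {T \<in> subtrees (del G v). w \<in> fst T \<and> u \<in> fst (addleaf T v w)}"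
    using card_Sv[OF lf, of "\<lambda>H. u \<in> fst H"] uv by simp
  also have "{T \<in> subtrees (del G v). w \<in> fst T \<and> u \<in> fst (addleaf T v w)}
      = {T \<in> subtrees (del G v). u \<in> fst T \<and> w \<in> fst T}"
    using uv by (auto simp: addleaf_def)
  finally show ?thesis unfolding tc_def KK_def by simp
qed

lemma KK_le: "simple_graph G \<Longrightarrow> KK G u w \<le> tc G u"
  unfolding KK_def tc_def by (rule card_mono) (use finite_subtrees[of G] in auto)

lemma KK_same: "KK G u u = tc G u"
  unfolding KK_def tc_def by simp

definition walk :: "'a set set \<Rightarrow> 'a list \<Rightarrow> bool" where
  "walk E p \<longleftrightarrow> (\<forall>i. Suc i < length p \<longrightarrow> {p!i, p!Suc i} \<in> E)"

lemma walk_append: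
  assumes "walk E xs" "walk E ys" "xs \<noteq> []" "ys \<noteq> []" "{last xs, hd ys} \<in> E"
  shows "walk E (xs @ ys)"
  unfolding walk_def
proof (intro allI impI)
  fix i assume i: "Suc i < length (xs @ ys)"
  show "{(xs @ ys) ! i, (xs @ ys) ! Suc i} \<in> E"
  proof (cases "Suc i < length xs")
    case True
    then show ?thesis using assms(1) unfolding walk_def by (simp add: nth_append)
  next
    case False
    show ?thesis
    proof (cases "i < length xs")
      case True
      then have ii: "i = length xs - 1" using False by simp
      have "(xs @ ys) ! i = last xs" using ii assms(3) by (simp add: nth_append last_conv_nth)
      moreover have "(xs @ ys) ! Suc i = hd ys" using ii assms(3,4)
        by (simp add: nth_append hd_conv_nth)
      ultimately show ?thesis using assms(5) by simp
    next
      case False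
      then have "(xs @ ys) ! i = ys ! (i - length xs)" "(xs @ ys) ! Suc i = ys ! Suc (i - length xs)"
        by (simp_all add: nth_append Suc_diff_le)
      moreover have "Suc (i - length xs) < length ys" using i False by simp
      ultimately show ?thesis using assms(2) unfolding walk_def by simp
    qed
  qed
qed

lemma walk_drop: "walk E p \<Longrightarrow> walk E (drop i p)"
  unfolding walk_def by (auto simp: add.commute[of i])

lemma walk_take: "walk E p \<Longrightarrow> walk E (take i p)"
  unfolding walk_def by auto

lemma walk_single: "walk E [y]"
  unfolding walk_def by simp

lemma walk_rot:
  assumes "cycle_edges R \<subseteq> E" shows "walk E R"
  unfolding walk_def using cons_edge assms by blast

lemma cross:
  assumes "(adj E)\<^sup>*\<^sup>* a b" "a \<in> S" "b \<notin> S"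
  shows "\<exists>z z'. {z,z'} \<in> E \<and> z \<in> S \<and> z' \<notin> S"
  using assms
proof (induction rule: rtranclp_induct)
  case base then show ?case by simp
next
  case (step y z)
  show ?case
  proof (cases "y \<in> S")
    case True then show ?thesis using step unfolding adj_def by blast
  next
    case False then show ?thesis using step by blast
  qed
qed

lemma uc_cycle:
  assumes "unicyclic H"
  obtains vs where "distinct vs" "3 \<le> length vs" "set vs \<subseteq> fst H" "cycle_edges vs \<subseteq> snd H"
    "\<And>C. is_cycle H C \<Longrightarrow> C = cycle_edges vs"
proof -
  obtain C where C: "is_cycle H C" "\<And>C'. is_cycle H C' \<Longrightarrow> C' = C"
    using assms unfolding unicyclic_def by blast
  then obtain vs where "distinct vs" "3 \<le> length vs" "set vs \<subseteq> fst H" "C = cycle_edges vs" "C \<subseteq> snd H"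
    unfolding is_cycle_def by blast
  then show ?thesis using that C(2) by blast
qed

lemma girth_eq:
  assumes "is_cycle H C" "\<And>C'. is_cycle H C' \<Longrightarrow> C' = C"
  shows "girth H = card C"
  unfolding girth_def
proof (rule Least_equality)
  show "\<exists>C'. is_cycle H C' \<and> card C' = card C" using assms(1) by blast
next
  fix y assume "\<exists>C'. is_cycle H C' \<and> card C' = y"
  then show "card C \<le> y" using assms(2) by blast
qed

lemma is_cycle_vs:
  assumes "distinct vs" "3 \<le> length vs" "set vs \<subseteq> fst H" "cycle_edges vs \<subseteq> snd H"
  shows "is_cycle H (cycle_edges vs)"
  unfolding is_cycle_def using assms by blast

lemma card2_obtain:
  assumes "card e = 2" "x \<in> e"
  obtains y where "e = {x,y}" "y \<noteq> x"
proof -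
  have fe: "finite e" using assms(1) by (metis card.infinite zero_neq_numeral)
  have "card (e - {x}) = 1" using assms fe by (simp add: card_Diff_singleton)
  then obtain y where y: "e - {x} = {y}" by (rule card_1_singletonE)
  then have "e = {x,y}" using assms(2) by blast
  moreover have "y \<noteq> x" using y by blast
  ultimately show ?thesis using that by blast
qed

lemma exists_leaf:
  assumes uc: "unicyclic H" and big: "girth H < card (fst H)"
  shows "\<exists>x w. isleaf H x w \<and> unicyclic (del H x) \<and> girth (del H x) = girth H
            \<and> card (fst (del H x)) = card (fst H) - 1"
proof -
  obtain vs where vs: "distinct vs" "3 \<le> length vs" "set vs \<subseteq> fst H" "cycle_edges vs \<subseteq> snd H"
    and uniq: "\<And>C. is_cycle H C \<Longrightarrow> C = cycle_edges vs"
    using uc_cycle[OF uc] by blast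
  let ?S = "set vs"
  let ?C = "cycle_edges vs"
  let ?V = "fst H"
  let ?E = "snd H"
  have cyc: "is_cycle H ?C" by (rule is_cycle_vs[OF vs])
  have gl: "girth H = length vs"
    using girth_eq[OF cyc uniq] card_cycle_edges[OF vs(1,2)] by simp
  have sg: "simple_graph H" using uc unfolding unicyclic_def by simp
  have fin: "finite ?V" using sg unfolding simple_graph_def by simp
  have Esub: "\<And>e. e \<in> ?E \<Longrightarrow> e \<subseteq> ?V" and Ecard: "\<And>e. e \<in> ?E \<Longrightarrow> card e = 2"
    using sg unfolding simple_graph_def by auto
  have conn: "\<And>a b. a \<in> ?V \<Longrightarrow> b \<in> ?V \<Longrightarrow> (adj ?E)\<^sup>*\<^sup>* a b"
    using uc unfolding unicyclic_def connected_graph_def by blast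
  have cardS: "card ?S = length vs" by (rule distinct_card[OF vs(1)])
  have "?S \<noteq> ?V" using cardS gl big by auto
  then obtain x0 where x0: "x0 \<in> ?V" "x0 \<notin> ?S" using vs(3) by blast
  have l0: "0 < length vs" using vs(2) by linarith
  have s0: "vs!0 \<in> ?S" using l0 by simp
  have "(adj ?E)\<^sup>*\<^sup>* (vs!0) x0" using conn[OF _ x0(1)] s0 vs(3) by blast
  then obtain a b where ab: "{a,b} \<in> ?E" "a \<in> ?S" "b \<notin> ?S" using cross[OF _ s0 x0(2)] by blast
  have bV: "b \<in> ?V" using Esub[OF ab(1)] by simp
  have aV: "a \<in> ?V" using Esub[OF ab(1)] by simp
  define P where "P = {p. distinct p \<and> 2 \<le> length p \<and> hd p \<in> ?S \<and> set (tl p) \<inter> ?S = {}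
      \<and> set p \<subseteq> ?V \<and> walk ?E p}"
  have abP: "[a,b] \<in> P"
    unfolding P_def walk_def using ab aV bV by (auto simp: less_Suc_eq)
  have finP: "finite P"
    by (rule finite_subset[OF _ finite_subset_distinct[OF fin]]) (auto simp: P_def)
  let ?m = "Max (length ` P)"
  have "?m \<in> length ` P" using finP abP by (intro Max_in) auto
  then obtain p where pP: "p \<in> P" and pm: "length p = ?m" by auto
  have pmax: "\<And>q. q \<in> P \<Longrightarrow> length q \<le> length p"
    using finP pm by (simp add: Max_ge)
  have pd: "distinct p" and pl: "2 \<le> length p" and phd: "hd p \<in> ?S"
    and ptl: "set (tl p) \<inter> ?S = {}" and pV: "set p \<subseteq> ?V" and pw: "walk ?E p"
    using pP unfolding P_def by auto
  let ?n = "length p"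
  define x where "x = last p"
  define pr where "pr = p ! (?n - 2)"
  have pne: "p \<noteq> []" using pl by auto
  have tlne: "tl p \<noteq> []" using pl by (cases p) auto
  have xtl: "x \<in> set (tl p)" using tlne pne unfolding x_def by (simp add: last_tl[symmetric])
  have xS: "x \<notin> ?S" using xtl ptl by blast
  have xn: "x = p ! (?n - 1)" unfolding x_def using pne by (simp add: last_conv_nth)
  have xV: "x \<in> ?V" using xtl pV by (meson list.set_sel(2) pne subsetD)
  have prx: "{pr, x} \<in> ?E"
  proof -
    have "Suc (?n - 2) < ?n" using pl by simp
    then have "{p!(?n-2), p!Suc (?n-2)} \<in> ?E" using pw unfolding walk_def by blast
    moreover have "Suc (?n - 2) = ?n - 1" using pl by simp
    ultimately show ?thesis unfolding pr_def xn by simp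
  qed
  have prne: "pr \<noteq> x"
  proof -
    have "?n - 2 < ?n" "?n - 1 < ?n" "?n - 2 \<noteq> ?n - 1" using pl by linarith+
    then show ?thesis unfolding pr_def xn using nth_eq_iff_index_eq[OF pd] by blast
  qed
  have nocyc: False if L: "distinct L" "3 \<le> length L" "set L \<subseteq> ?V" "walk ?E L"
      "{last L, hd L} \<in> ?E" "x \<in> set L" for L
  proof -
    have "is_cycle H (cycle_edges L)"
      by (rule cycle_from_list[OF L(1,2,3) _ L(5)]) (use L(4) in \<open>simp add: walk_def\<close>)
    then have "cycle_edges L = ?C" by (rule uniq)
    moreover have "x \<in> \<Union> (cycle_edges L)" by (rule in_Union_cycle_edges[OF L(6)])
    ultimately have "x \<in> ?S" using Union_cycle_edges[of vs] by blast
    then show False using xS by simp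
  qed
  have key: "e = {x, pr}" if e: "e \<in> ?E" "x \<in> e" for e
  proof -
    obtain y where ey: "e = {x,y}" "y \<noteq> x" using card2_obtain[OF Ecard[OF e(1)] e(2)] by blast
    have yV: "y \<in> ?V" using Esub[OF e(1)] ey by simp
    have xyE: "{x,y} \<in> ?E" using e ey by simp
    show ?thesis
    proof (cases "y \<in> set p")
      case True
      then obtain i where i: "i < ?n" "p ! i = y" by (auto simp: in_set_conv_nth)
      have "i \<noteq> ?n - 1" using i ey(2) xn by auto
      show ?thesis
      proof (cases "i = ?n - 2")
        case True then show ?thesis using i ey unfolding pr_def by simp
      next
        case False
        then have ilt: "i + 3 \<le> ?n" using i \<open>i \<noteq> ?n - 1\<close> by linarith
        let ?L = "drop i p"
        have "distinct ?L" using pd by simp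
        moreover have "3 \<le> length ?L" using ilt by simp
        moreover have "set ?L \<subseteq> ?V" using pV set_drop_subset by fastforce
        moreover have "walk ?E ?L" by (rule walk_drop[OF pw])
        moreover have "last ?L = x" using i unfolding x_def by simp
        moreover have "hd ?L = y" using i by (simp add: hd_drop_conv_nth)
        moreover have "x \<in> set ?L"
        proof -
          have Lne: "?L \<noteq> []" using i by simp
          show ?thesis using last_in_set[OF Lne] \<open>last ?L = x\<close> by (simp only:)
        qed
        ultimately have False using nocyc[of ?L] xyE by simp
        then show ?thesis by simp
      qed
    next
      case ynp: False
      show ?thesis
      proof (cases "y \<in> ?S")
        case False
        let ?q = "p @ [y]"
        have "?q \<in> P"
        proof -
          have "distinct ?q" using pd ynp by simp
          moreover have "2 \<le> length ?q" using pl by simp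
          moreover have "hd ?q \<in> ?S" using phd pne by simp
          moreover have "set (tl ?q) \<inter> ?S = {}" using ptl False pne by (simp add: tl_append2)
          moreover have "set ?q \<subseteq> ?V" using pV yV by simp
          moreover have "walk ?E ?q"
            by (rule walk_append[OF pw walk_single pne]) (use xyE x_def in simp_all)
          ultimately show ?thesis unfolding P_def by blast
        qed
        then have "length ?q \<le> ?n" by (rule pmax)
        then show ?thesis by simp
      next
        case True
        obtain R where R: "distinct R" "set R = ?S" "length R = length vs" "cycle_edges R = ?C" "R!0 = y"
          using rotate_to_front[OF True] vs(1) by blast
        have "hd p \<in> set R" using phd R(2) by simp
        then obtain j where j: "j < length R" "R ! j = hd p" by (auto simp: in_set_conv_nth)
        have "hd p \<in> set p" using pne by simp
        then have j0: "j \<noteq> 0" using j R(5) ynp by (metis)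
        let ?A = "take (Suc j) R"
        let ?L = "?A @ tl p"
        have Ane: "?A \<noteq> []" using j by (cases R) auto
        have "last ?A = ?A ! (length ?A - 1)" by (rule last_conv_nth[OF Ane])
        also have "length ?A - 1 = j" using j(1) by simp
        also have "?A ! j = R ! j" by simp
        finally have Alast: "last ?A = hd p" using j(2) by simp
        have Ahd: "hd ?A = y" using j R(5) Ane by (simp add: hd_conv_nth)
        have AS: "set ?A \<subseteq> ?S" using R(2) set_take_subset by metis
        have "distinct ?L" using R(1) pd AS ptl by (auto simp: distinct_tl)
        moreover have "3 \<le> length ?L" using j j0 pl by simp
        moreover have "set ?L \<subseteq> ?V" using AS vs(3) pV by (auto dest: list.set_sel(2)[OF pne])
        moreover have "walk ?E ?L"
        proof (rule walk_append[OF walk_take[OF walk_rot] _ Ane tlne])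
          show "cycle_edges R \<subseteq> ?E" using R(4) vs(4) by simp
          show "walk ?E (tl p)" using walk_drop[OF pw, of 1] by (simp add: drop_Suc)
          have "{p!0, p!Suc 0} \<in> ?E" using pw pl unfolding walk_def by simp
          moreover have "hd (tl p) = p ! 1" using tlne pne by (cases p) (auto simp: hd_conv_nth)
          ultimately show "{last ?A, hd (tl p)} \<in> ?E" using Alast pne by (simp add: hd_conv_nth)
        qed
        moreover have "last ?L = x" using tlne pne unfolding x_def by (simp add: last_tl)
        moreover have "hd ?L = y" using Ane Ahd by simp
        moreover have "x \<in> set ?L" using xtl by simp
        ultimately have False using nocyc[of ?L] xyE by simp
        then show ?thesis by simp
      qed
    qed
  qed
  have vedge: "\<forall>e\<in>?E. x \<in> e \<longrightarrow> e = {x,pr}" using key by blast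
  have wx: "pr \<noteq> x" by (rule prne)
  have lf: "isleaf H x pr"
  proof -
    have "{e \<in> ?E. x \<in> e} = {{x,pr}}"
    proof
      show "{e \<in> ?E. x \<in> e} \<subseteq> {{x,pr}}" using vedge by blast
      have "{x,pr} \<in> ?E" using prx by (simp add: insert_commute)
      then show "{{x,pr}} \<subseteq> {e \<in> ?E. x \<in> e}" by simp
    qed
    then show ?thesis unfolding isleaf_def using sg xV wx by simp
  qed
  let ?H = "del H x"
  have sgd: "simple_graph ?H" by (rule simple_del[OF sg])
  have connd: "connected_graph ?H"
    unfolding connected_graph_def
  proof (intro ballI)
    fix a b assume a: "a \<in> fst ?H" and b: "b \<in> fst ?H"
    have a1: "a \<in> ?V" "a \<noteq> x" using a by (auto simp: del_def)
    have b1: "b \<in> ?V" "b \<noteq> x" using b by (auto simp: del_def)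
    have "(adj ?E)\<^sup>*\<^sup>* a b" using conn a1 b1 by blast
    from leaf_conn[OF this a1(2) wx vedge] b1(2)
    have "(adj {e\<in>?E. x \<notin> e})\<^sup>*\<^sup>* a b" by blast
    moreover have "snd ?H = {e\<in>?E. x \<notin> e}" by (simp add: del_def)
    ultimately show "(adj (snd ?H))\<^sup>*\<^sup>* a b" by simp
  qed
  have cycd: "is_cycle ?H ?C"
  proof (rule is_cycle_vs[OF vs(1,2)])
    show "set vs \<subseteq> fst ?H" using vs(3) xS by (auto simp: del_def)
    show "?C \<subseteq> snd ?H"
    proof
      fix e assume e: "e \<in> ?C"
      have "e \<subseteq> ?S" using Union_upper[OF e] Union_cycle_edges[of vs] by (rule subset_trans)
      then have "x \<notin> e" using xS by blast
      moreover have "e \<in> ?E" using e vs(4) by blast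
      ultimately show "e \<in> snd ?H" by (simp add: del_def)
    qed
  qed
  have uniqd: "\<And>C'. is_cycle ?H C' \<Longrightarrow> C' = ?C"
  proof -
    fix C' assume "is_cycle ?H C'"
    moreover have "fst ?H \<subseteq> ?V" "snd ?H \<subseteq> ?E" by (auto simp: del_def)
    ultimately have "is_cycle H C'" by (rule cycle_mono)
    then show "C' = ?C" by (rule uniq)
  qed
  have ucd: "unicyclic ?H" unfolding unicyclic_def using sgd connd cycd uniqd by blast
  have gd: "girth ?H = girth H" using girth_eq[OF cycd uniqd] girth_eq[OF cyc uniq] by simp
  have cd: "card (fst ?H) = card ?V - 1" using xV by (simp add: del_def card_Diff_singleton)
  show ?thesis using lf ucd gd cd by blast
qed

lemma rtc_replace:
  assumes "(adj E)\<^sup>*\<^sup>* u z" "(adj (E - {{a,b}}))\<^sup>*\<^sup>* a b"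
  shows "(adj (E - {{a,b}}))\<^sup>*\<^sup>* u z"
  using assms(1)
proof (induction rule: rtranclp_induct)
  case base then show ?case by simp
next
  case (step y z)
  show ?case
  proof (cases "{y,z} = {a,b}")
    case True
    then have "(y = a \<and> z = b) \<or> (y = b \<and> z = a)" by (auto simp: doubleton_eq_iff)
    then have "(adj (E - {{a,b}}))\<^sup>*\<^sup>* y z"
    proof
      assume "y = a \<and> z = b" then show ?thesis using assms(2) by simp
    next
      assume "y = b \<and> z = a" then show ?thesis using rtc_sym[OF assms(2)] by simp
    qed
    with step(3) show ?thesis by (rule rtranclp_trans)
  next
    case False
    then have "adj (E - {{a,b}}) y z" using step(2) unfolding adj_def by simp
    then show ?thesis using step(3) by (meson rtranclp.rtrancl_into_rtrancl)
  qed
qed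

lemma KK_pos:
  assumes uc: "unicyclic H" and a: "a \<in> fst H" and b: "b \<in> fst H"
  shows "1 \<le> KK H a b"
proof -
  obtain vs where vs: "distinct vs" "3 \<le> length vs" "set vs \<subseteq> fst H" "cycle_edges vs \<subseteq> snd H"
    and uniq: "\<And>C. is_cycle H C \<Longrightarrow> C = cycle_edges vs"
    using uc_cycle[OF uc] by blast
  have sg: "simple_graph H" using uc unfolding unicyclic_def by simp
  let ?k = "length vs"
  let ?e = "{vs!0, vs!1}"
  let ?E' = "snd H - {?e}"
  let ?T = "(fst H, ?E')"
  have eC: "?e \<in> cycle_edges vs" using cons_edge[of 0 vs] vs(2) by simp
  have ne: "vs!j \<noteq> vs!0" "vs!j \<noteq> vs!1" if "2 \<le> j" "j < ?k" for j
  proof -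
    have f: "j \<noteq> 0" "j \<noteq> 1" "0 < ?k" "1 < ?k" using that vs(2) by linarith+
    show "vs!j \<noteq> vs!0" using nth_eq_iff_index_eq[OF vs(1) that(2) f(3)] f(1) by blast
    show "vs!j \<noteq> vs!1" using nth_eq_iff_index_eq[OF vs(1) that(2) f(4)] f(2) by blast
  qed
  have path: "(adj ?E')\<^sup>*\<^sup>* (vs!1) (vs!j)" if "1 \<le> j" "j < ?k" for j
    using that
  proof (induction j rule: dec_induct)
    case base then show ?case by simp
  next
    case (step j)
    have "{vs!j, vs!Suc j} \<in> snd H" using cons_edge[of j vs] step vs(4) by auto
    moreover have "{vs!j, vs!Suc j} \<noteq> ?e" using ne[of "Suc j"] step by (auto simp: doubleton_eq_iff)
    ultimately have "adj ?E' (vs!j) (vs!Suc j)" unfolding adj_def by simp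
    then show ?case using step by (meson Suc_lessD rtranclp.rtrancl_into_rtrancl)
  qed
  have vne: "vs \<noteq> []" using vs(2) by (cases vs) auto
  have p1: "(adj ?E')\<^sup>*\<^sup>* (vs!1) (vs!(?k-1))" using path[of "?k-1"] vs(2) by simp
  have "{vs!(?k-1), vs!0} \<in> snd H" using last_edge[OF vne] vs(4) by auto
  moreover have "{vs!(?k-1), vs!0} \<noteq> ?e" using ne[of "?k-1"] vs(2) by (auto simp: doubleton_eq_iff)
  ultimately have "adj ?E' (vs!(?k-1)) (vs!0)" unfolding adj_def by simp
  then have "(adj ?E')\<^sup>*\<^sup>* (vs!1) (vs!0)" using p1 by (meson rtranclp.rtrancl_into_rtrancl)
  then have p0: "(adj ?E')\<^sup>*\<^sup>* (vs!0) (vs!1)" by (rule rtc_sym)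
  have conn: "connected_graph ?T"
    unfolding connected_graph_def
  proof (intro ballI)
    fix u z assume "u \<in> fst ?T" "z \<in> fst ?T"
    then have "(adj (snd H))\<^sup>*\<^sup>* u z" using uc unfolding unicyclic_def connected_graph_def by simp
    then show "(adj (snd ?T))\<^sup>*\<^sup>* u z" using rtc_replace p0 by simp
  qed
  have acyc: "acyclic_graph ?T"
    unfolding acyclic_graph_def
  proof
    assume "\<exists>C. is_cycle ?T C"
    then obtain C where C: "is_cycle ?T C" by blast
    have "is_cycle H C" by (rule cycle_mono[OF C]) auto
    then have "C = cycle_edges vs" by (rule uniq)
    moreover have "C \<subseteq> snd ?T" using C unfolding is_cycle_def by blast
    ultimately have "?e \<in> snd H - {?e}" using eC by (metis snd_conv subsetD)
    then show False by simp
  qed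
  have ed: "\<forall>e\<in>snd H. e \<subseteq> fst H" using sg unfolding simple_graph_def by simp
  have sub: "subgraph ?T H" unfolding subgraph_def fst_conv snd_conv using ed by blast
  have "fst ?T \<noteq> {}" using a by auto
  then have "is_tree ?T" unfolding is_tree_def using conn acyc by simp
  then have "?T \<in> subtrees H" unfolding subtrees_def using sub by simp
  then have mem: "?T \<in> {T \<in> subtrees H. a \<in> fst T \<and> b \<in> fst T}" using a b by simp
  have fin: "finite {T \<in> subtrees H. a \<in> fst T \<and> b \<in> fst T}" using finite_subtrees[OF sg] by simp
  have "0 < card {T \<in> subtrees H. a \<in> fst T \<and> b \<in> fst T}"
    using fin mem by (subst card_gt_0_iff) blast
  then show ?thesis unfolding KK_def by simp
qed

definition mapG :: "('a \<Rightarrow> 'b) \<Rightarrow> 'a graph \<Rightarrow> 'b graph" where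
  "mapG f T = (f ` fst T, (`) f ` snd T)"

lemma rtc_map:
  assumes "(adj E)\<^sup>*\<^sup>* a b" shows "(adj ((`) f ` E))\<^sup>*\<^sup>* (f a) (f b)"
  using assms
proof (induction rule: rtranclp_induct)
  case base then show ?case by simp
next
  case (step y z)
  have "{y,z} \<in> E" using step(2) unfolding adj_def by simp
  then have "f ` {y,z} \<in> (`) f ` E" by (rule imageI)
  then have "adj ((`) f ` E) (f y) (f z)" unfolding adj_def by simp
  with step(3) show ?case by (rule rtranclp.rtrancl_into_rtrancl)
qed

lemma iso_tree:
  assumes inj: "inj_on f (fst T)" and tr: "is_tree T" and ed: "\<forall>e\<in>snd T. e \<subseteq> fst T"
  shows "is_tree (mapG f T)"
proof -
  have ne: "fst (mapG f T) \<noteq> {}" using tr unfolding is_tree_def mapG_def by simp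
  have conn: "connected_graph (mapG f T)"
    unfolding connected_graph_def
  proof (intro ballI)
    fix a' b' assume a': "a' \<in> fst (mapG f T)" and b': "b' \<in> fst (mapG f T)"
    obtain a where a: "a \<in> fst T" "a' = f a" using a' unfolding mapG_def by auto
    obtain b where b: "b \<in> fst T" "b' = f b" using b' unfolding mapG_def by auto
    have "(adj (snd T))\<^sup>*\<^sup>* a b" using tr a b unfolding is_tree_def connected_graph_def by blast
    then have "(adj ((`) f ` snd T))\<^sup>*\<^sup>* (f a) (f b)" by (rule rtc_map)
    then show "(adj (snd (mapG f T)))\<^sup>*\<^sup>* a' b'" using a b unfolding mapG_def by simp
  qed
  have acyc: "acyclic_graph (mapG f T)"
    unfolding acyclic_graph_def
  proof
    assume "\<exists>C. is_cycle (mapG f T) C"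
    then obtain ws where ws: "distinct ws" "3 \<le> length ws" "set ws \<subseteq> fst (mapG f T)"
      "cycle_edges ws \<subseteq> snd (mapG f T)" unfolding is_cycle_def by blast
    let ?g = "inv_into (fst T) f"
    let ?vs = "map ?g ws"
    have wsV: "set ws \<subseteq> f ` fst T" using ws(3) unfolding mapG_def by simp
    have injg: "inj_on ?g (f ` fst T)" by (rule inj_on_inv_into) simp
    have d: "distinct ?vs" using ws(1) distinct_map inj_on_subset[OF injg wsV] by blast
    have l: "3 \<le> length ?vs" using ws(2) by simp
    have s: "set ?vs \<subseteq> fst T" using wsV by (auto intro: inv_into_into)
    have ce: "cycle_edges ?vs \<subseteq> snd T"
    proof
      fix e assume "e \<in> cycle_edges ?vs"
      then obtain i where i: "i < length ws" and e: "e = {?vs!i, ?vs!((i+1) mod length ws)}"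
        unfolding cycle_edges_def by auto
      have "0 < length ws" using i by linarith
      then have i1: "(i+1) mod length ws < length ws" by (rule mod_less_divisor)
      have "{ws!i, ws!((i+1) mod length ws)} \<in> cycle_edges ws" using cycle_edges_in[OF i] .
      then have "{ws!i, ws!((i+1) mod length ws)} \<in> (`) f ` snd T" using ws(4) unfolding mapG_def by auto
      then obtain e0 where e0: "e0 \<in> snd T" "{ws!i, ws!((i+1) mod length ws)} = f ` e0" by blast
      have "e = ?g ` {ws!i, ws!((i+1) mod length ws)}" using e i i1 by simp
      also have "\<dots> = ?g ` f ` e0" using e0(2) by simp
      also have "\<dots> = e0"
      proof -
        have "e0 \<subseteq> fst T" using ed e0(1) by blast
        have "?g ` f ` e0 = (\<lambda>a. ?g (f a)) ` e0" by (simp add: image_image)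
        also have "\<dots> = (\<lambda>a. a) ` e0" by (rule image_cong) (use \<open>e0 \<subseteq> fst T\<close> inj in \<open>auto simp: inv_into_f_f\<close>)
        finally show ?thesis by simp
      qed
      finally show "e \<in> snd T" using e0(1) by simp
    qed
    have "is_cycle T (cycle_edges ?vs)" unfolding is_cycle_def using d l s ce by blast
    then show False using tr unfolding is_tree_def acyclic_graph_def by blast
  qed
  show ?thesis unfolding is_tree_def using ne conn acyc by blast
qed

lemma mapG_sub:
  assumes "subgraph T G" shows "subgraph (mapG f T) (mapG f G)"
proof -
  have a: "fst T \<subseteq> fst G" "snd T \<subseteq> snd G" "\<forall>e\<in>snd T. e \<subseteq> fst T"
    using assms unfolding subgraph_def by simp_all
  have "f ` fst T \<subseteq> f ` fst G" using a(1) by (rule image_mono)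
  moreover have "(`) f ` snd T \<subseteq> (`) f ` snd G" using a(2) by (rule image_mono)
  moreover have "\<forall>e\<in>(`) f ` snd T. e \<subseteq> f ` fst T" using a(3) by blast
  ultimately show ?thesis unfolding subgraph_def mapG_def by simp
qed

lemma mapG_inv:
  assumes inj: "inj_on f V" and s: "fst T \<subseteq> V" and ed: "\<forall>e\<in>snd T. e \<subseteq> fst T"
  shows "mapG (inv_into V f) (mapG f T) = T"
proof -
  have k: "inv_into V f ` f ` A = A" if "A \<subseteq> V" for A
  proof -
    have "inv_into V f ` f ` A = (\<lambda>a. inv_into V f (f a)) ` A" by (simp add: image_image)
    also have "\<dots> = (\<lambda>a. a) ` A" by (rule image_cong) (use that inj in \<open>auto simp: inv_into_f_f\<close>)
    finally show ?thesis by simp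
  qed
  have 1: "inv_into V f ` f ` fst T = fst T" using k s by simp
  have 2: "(`) (inv_into V f) ` (`) f ` snd T = snd T"
  proof -
    have "(`) (inv_into V f) ` (`) f ` snd T = (\<lambda>e. inv_into V f ` f ` e) ` snd T" by (simp add: image_image)
    also have "\<dots> = (\<lambda>e. e) ` snd T"
    proof (rule image_cong)
      fix e assume "e \<in> snd T" then have "e \<subseteq> V" using ed s by blast
      then show "inv_into V f ` f ` e = e" by (rule k)
    qed simp
    finally show ?thesis by simp
  qed
  show ?thesis unfolding mapG_def using 1 2 by (simp add: prod_eq_iff)
qed

lemma mapG_inv2:
  assumes s: "fst T \<subseteq> f ` V" and ed: "\<forall>e\<in>snd T. e \<subseteq> fst T"
  shows "mapG f (mapG (inv_into V f) T) = T"
proof -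
  have k: "f ` inv_into V f ` A = A" if "A \<subseteq> f ` V" for A
  proof -
    have "f ` inv_into V f ` A = (\<lambda>a. f (inv_into V f a)) ` A" by (simp add: image_image)
    also have "\<dots> = (\<lambda>a. a) ` A" by (rule image_cong) (use that in \<open>auto simp: f_inv_into_f\<close>)
    finally show ?thesis by simp
  qed
  have 1: "f ` inv_into V f ` fst T = fst T" using k s by simp
  have 2: "(`) f ` (`) (inv_into V f) ` snd T = snd T"
  proof -
    have "(`) f ` (`) (inv_into V f) ` snd T = (\<lambda>e. f ` inv_into V f ` e) ` snd T" by (simp add: image_image)
    also have "\<dots> = (\<lambda>e. e) ` snd T"
    proof (rule image_cong)
      fix e assume "e \<in> snd T" then have "e \<subseteq> f ` V" using ed s by blast
      then show "f ` inv_into V f ` e = e" by (rule k)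
    qed simp
    finally show ?thesis by simp
  qed
  show ?thesis unfolding mapG_def using 1 2 by (simp add: prod_eq_iff)
qed

lemma iso_subtrees:
  assumes ed: "\<forall>e\<in>snd G. e \<subseteq> fst G" and inj: "inj_on f (fst G)"
  shows "subtrees (mapG f G) = mapG f ` subtrees G" "inj_on (mapG f) (subtrees G)"
proof -
  let ?V = "fst G"
  let ?g = "inv_into ?V f"
  have fwd: "mapG f T \<in> subtrees (mapG f G)" if T: "T \<in> subtrees G" for T
  proof -
    have sg: "subgraph T G" and tr: "is_tree T" using T unfolding subtrees_def by auto
    have "inj_on f (fst T)" using inj sg unfolding subgraph_def by (blast intro: inj_on_subset)
    moreover have "\<forall>e\<in>snd T. e \<subseteq> fst T" using sg unfolding subgraph_def by simp
    ultimately have "is_tree (mapG f T)" using tr iso_tree by blast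
    moreover have "subgraph (mapG f T) (mapG f G)" by (rule mapG_sub[OF sg])
    ultimately show ?thesis unfolding subtrees_def by simp
  qed
  have GG: "mapG ?g (mapG f G) = G" by (rule mapG_inv[OF inj _ ed]) simp
  have bwd: "T2 \<in> mapG f ` subtrees G" if T2: "T2 \<in> subtrees (mapG f G)" for T2
  proof -
    have sg: "subgraph T2 (mapG f G)" and tr: "is_tree T2" using T2 unfolding subtrees_def by auto
    have s2: "fst T2 \<subseteq> f ` ?V" and ed2: "\<forall>e\<in>snd T2. e \<subseteq> fst T2"
      using sg unfolding subgraph_def mapG_def by simp_all
    have injg: "inj_on ?g (fst T2)" using inj_on_inv_into[of "fst T2" f ?V] s2 by simp
    have "is_tree (mapG ?g T2)" by (rule iso_tree[OF injg tr ed2])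
    moreover have "subgraph (mapG ?g T2) G" using mapG_sub[OF sg, of ?g] GG by simp
    ultimately have "mapG ?g T2 \<in> subtrees G" unfolding subtrees_def by simp
    moreover have "mapG f (mapG ?g T2) = T2" by (rule mapG_inv2[OF s2 ed2])
    ultimately show ?thesis by (metis imageI)
  qed
  show "subtrees (mapG f G) = mapG f ` subtrees G" using fwd bwd by blast
  show "inj_on (mapG f) (subtrees G)"
  proof (rule inj_on_inverseI[of _ "mapG ?g"])
    fix T assume "T \<in> subtrees G"
    then have sg: "subgraph T G" unfolding subtrees_def by simp
    then show "mapG ?g (mapG f T) = T"
      by (intro mapG_inv[OF inj]) (auto simp: subgraph_def)
  qed
qed

lemma iso_counts:
  assumes sg: "simple_graph G" and inj: "inj_on f (fst G)" and x: "x \<in> fst G"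
  shows "card (subtrees (mapG f G)) = card (subtrees G)" "tc (mapG f G) (f x) = tc G x"
proof -
  have ed: "\<forall>e\<in>snd G. e \<subseteq> fst G" using sg unfolding simple_graph_def by simp
  note I = iso_subtrees[OF ed inj]
  show "card (subtrees (mapG f G)) = card (subtrees G)" using I by (simp add: card_image)
  have "{T \<in> subtrees (mapG f G). f x \<in> fst T} = mapG f ` {T \<in> subtrees G. x \<in> fst T}"
  proof -
    have m: "f x \<in> fst (mapG f T) \<longleftrightarrow> x \<in> fst T" if "T \<in> subtrees G" for T
    proof -
      have "fst T \<subseteq> fst G" using that unfolding subtrees_def subgraph_def by simp
      then show ?thesis using inj x unfolding mapG_def by (auto dest: inj_onD)
    qed
    show ?thesis unfolding I(1) using m by blast
  qed
  moreover have "inj_on (mapG f) {T \<in> subtrees G. x \<in> fst T}" using I(2) by (rule inj_on_subset) blast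
  ultimately show "tc (mapG f G) (f x) = tc G x" unfolding tc_def by (simp add: card_image)
qed

definition Cl :: "nat \<Rightarrow> nat graph" where
  "Cl l = ({0..<l}, cycle_graph_edges l)"

lemma cge_image: "cycle_graph_edges l = (\<lambda>i. {i, (i+1) mod l}) ` {..<l}"
  unfolding cycle_graph_edges_def by auto

lemma ce_image: "cycle_edges R = (\<lambda>i. {R!i, R!((i+1) mod length R)}) ` {..<length R}"
  unfolding cycle_edges_def by auto

lemma cge_sub: "e \<in> cycle_graph_edges l \<Longrightarrow> e \<subseteq> {0..<l}"
  unfolding cge_image by auto

lemma cge_card: assumes "3 \<le> l" "e \<in> cycle_graph_edges l" shows "card e = 2"
proof -
  obtain i where i: "i < l" "e = {i, (i+1) mod l}" using assms(2) unfolding cge_image by auto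
  have "(i+1) mod l \<noteq> i"
  proof (cases "i + 1 < l")
    case True then show ?thesis by simp
  next
    case False then have "i + 1 = l" using i by simp
    then show ?thesis using assms(1) by simp
  qed
  then show ?thesis using i by simp
qed

lemma Cl_simple: "3 \<le> l \<Longrightarrow> simple_graph (Cl l)"
  unfolding simple_graph_def Cl_def using cge_sub cge_card by auto

lemma Cl_map:
  assumes "length R = l"
  shows "mapG ((!) R) (Cl l) = (set R, cycle_edges R)"
proof -
  have 1: "(!) R ` {0..<l} = set R" using assms by (auto simp: in_set_conv_nth)
  have "(`) ((!) R) ` cycle_graph_edges l = (\<lambda>i. (!) R ` {i, (i+1) mod l}) ` {..<l}"
    unfolding cge_image by (simp add: image_image)
  also have "\<dots> = cycle_edges R" unfolding ce_image assms by simp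
  finally show ?thesis unfolding mapG_def Cl_def using 1 by simp
qed

lemma base_iso:
  assumes uc: "unicyclic H" and cg: "card (fst H) = girth H" and u: "u \<in> fst H"
  shows "card (subtrees H) = card (subtrees (Cl (girth H))) \<and> tc H u = tc (Cl (girth H)) 0"
proof -
  obtain vs where vs: "distinct vs" "3 \<le> length vs" "set vs \<subseteq> fst H" "cycle_edges vs \<subseteq> snd H"
    and uniq: "\<And>C. is_cycle H C \<Longrightarrow> C = cycle_edges vs"
    using uc_cycle[OF uc] by blast
  let ?S = "set vs"
  let ?C = "cycle_edges vs"
  have cyc: "is_cycle H ?C" by (rule is_cycle_vs[OF vs])
  have gl: "girth H = length vs"
    using girth_eq[OF cyc uniq] card_cycle_edges[OF vs(1,2)] by simp
  have sg: "simple_graph H" using uc unfolding unicyclic_def by simp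
  have fin: "finite (fst H)" using sg unfolding simple_graph_def by simp
  have Esub: "\<And>e. e \<in> snd H \<Longrightarrow> e \<subseteq> fst H" and Ecard: "\<And>e. e \<in> snd H \<Longrightarrow> card e = 2"
    using sg unfolding simple_graph_def by auto
  have VS: "fst H = ?S"
  proof -
    have "card ?S = card (fst H)" using distinct_card[OF vs(1)] gl cg by simp
    then show ?thesis using card_subset_eq[OF fin vs(3)] by simp
  qed
  have EC: "snd H = ?C"
  proof
    show "?C \<subseteq> snd H" by (rule vs(4))
    show "snd H \<subseteq> ?C"
    proof
      fix e assume e: "e \<in> snd H"
      show "e \<in> ?C"
      proof (rule ccontr)
        assume eC: "e \<notin> ?C"
        have "card e = 2" by (rule Ecard[OF e])
        then obtain a b where ab: "e = {a,b}" "a \<noteq> b" by (meson card_2_iff)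
        have aS: "a \<in> ?S" and bS: "b \<in> ?S" using Esub[OF e] ab VS by auto
        obtain R where R: "distinct R" "set R = ?S" "length R = length vs" "cycle_edges R = ?C" "R!0 = a"
          using rotate_to_front[OF aS] vs(1) by blast
        have "b \<in> set R" using bS R(2) by simp
        then obtain j where j: "j < length R" "R ! j = b" by (auto simp: in_set_conv_nth)
        have j0: "j \<noteq> 0" using j R(5) ab(2) by metis
        have j1: "j \<noteq> 1"
        proof
          assume "j = 1"
          then have "e = {R!0, R!Suc 0}" using ab j R(5) by simp
          moreover have "{R!0, R!Suc 0} \<in> cycle_edges R" using cons_edge[of 0 R] j \<open>j = 1\<close> by simp
          ultimately show False using eC R(4) by simp
        qed
        let ?L = "take (Suc j) R"
        have Lne: "?L \<noteq> []" using j by (cases R) auto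
        have Llast: "last ?L = b"
        proof -
          have "last ?L = ?L ! (length ?L - 1)" by (rule last_conv_nth[OF Lne])
          also have "length ?L - 1 = j" using j(1) by simp
          finally show ?thesis using j by simp
        qed
        have Lhd: "hd ?L = a" using Lne R(5) by (simp add: hd_conv_nth)
        have "distinct ?L" using R(1) by simp
        moreover have "3 \<le> length ?L" using j j0 j1 by simp
        moreover have "set ?L \<subseteq> fst H" using set_take_subset[of "Suc j" R] R(2) VS by simp
        moreover have "walk (snd H) ?L"
          by (rule walk_take[OF walk_rot]) (use R(4) vs(4) in simp)
        moreover have "{last ?L, hd ?L} \<in> snd H" using Llast Lhd e ab by (simp add: insert_commute)
        ultimately have "is_cycle H (cycle_edges ?L)"
          by (intro cycle_from_list) (auto simp: walk_def)
        then have "cycle_edges ?L = ?C" by (rule uniq)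
        moreover have "{?L ! (length ?L - 1), ?L ! 0} \<in> cycle_edges ?L" by (rule last_edge[OF Lne])
        moreover have "{?L ! (length ?L - 1), ?L ! 0} = e"
          using Llast Lhd Lne ab by (simp add: last_conv_nth hd_conv_nth insert_commute)
        ultimately show False using eC by simp
      qed
    qed
  qed
  obtain R where R: "distinct R" "set R = ?S" "length R = length vs" "cycle_edges R = ?C" "R!0 = u"
    using rotate_to_front[of u vs] u VS vs(1) by blast
  let ?l = "girth H"
  have HR: "H = mapG ((!) R) (Cl ?l)"
  proof -
    have "mapG ((!) R) (Cl ?l) = (set R, cycle_edges R)" by (rule Cl_map) (simp add: R(3) gl)
    also have "\<dots> = H" using R VS EC by (simp add: prod_eq_iff)
    finally show ?thesis by simp
  qed
  have inj: "inj_on ((!) R) (fst (Cl ?l))"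
    unfolding Cl_def using R(1,3) gl by (auto intro!: inj_on_nth)
  have sgC: "simple_graph (Cl ?l)" using Cl_simple vs(2) gl by simp
  have "0 < ?l" using vs(2) gl by linarith
  then have z: "0 \<in> fst (Cl ?l)" unfolding Cl_def by simp
  note ic = iso_counts[OF sgC inj z]
  show ?thesis using ic R(5) HR by simp
qed

definition pu :: "nat \<Rightarrow> nat \<Rightarrow> nat" where "pu l j = (if j = l then 0 else j - 1)"

lemma ivl: "{j::nat. l \<le> j \<and> j < n} = {l..<n}" by auto

lemma US_alt: "US n l = ({0..<n}, cycle_graph_edges l \<union> (\<lambda>j. {0,j}) ` {l..<n})"
proof -
  have "{{0,j} | j. l \<le> j \<and> j < n} = (\<lambda>j. {0,j}) ` {j. l \<le> j \<and> j < n}" by (rule setcompr_eq_image)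
  then show ?thesis unfolding US_def ivl by simp
qed

lemma UP_alt: "UP n l = ({0..<n}, cycle_graph_edges l \<union> (\<lambda>j. {pu l j, j}) ` {l..<n})"
proof -
  have "{{if j = l then 0 else j - 1, j} | j. l \<le> j \<and> j < n} = (\<lambda>j. {pu l j, j}) ` {j. l \<le> j \<and> j < n}"
    unfolding pu_def by (rule setcompr_eq_image)
  then show ?thesis unfolding UP_def ivl by simp
qed

lemma US_base: "US l l = Cl l" unfolding US_alt Cl_def by simp
lemma UP_base: "UP l l = Cl l" unfolding UP_alt Cl_def by simp

lemma pu_lt: "l \<le> j \<Longrightarrow> 3 \<le> l \<Longrightarrow> pu l j < j" unfolding pu_def by auto

lemma US_simple:
  assumes "3 \<le> l" "l \<le> n" shows "simple_graph (US n l)"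
proof -
  have "e \<subseteq> {0..<n} \<and> card e = 2" if e: "e \<in> cycle_graph_edges l \<union> (\<lambda>j. {0,j}) ` {l..<n}" for e
  proof (cases "e \<in> cycle_graph_edges l")
    case True then show ?thesis using cge_sub[OF True] cge_card[OF assms(1) True] assms(2) by auto
  next
    case False
    then obtain j where j: "j \<in> {l..<n}" "e = {0,j}" using e by blast
    then have "j \<noteq> 0" using assms by auto
    then show ?thesis using j by auto
  qed
  then show ?thesis unfolding simple_graph_def US_alt by auto
qed

lemma UP_simple:
  assumes "3 \<le> l" "l \<le> n" shows "simple_graph (UP n l)"
proof -
  have "e \<subseteq> {0..<n} \<and> card e = 2" if e: "e \<in> cycle_graph_edges l \<union> (\<lambda>j. {pu l j, j}) ` {l..<n}" for e
  proof (cases "e \<in> cycle_graph_edges l")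
    case True then show ?thesis using cge_sub[OF True] cge_card[OF assms(1) True] assms(2) by auto
  next
    case False
    then obtain j where j: "j \<in> {l..<n}" "e = {pu l j, j}" using e by blast
    then have "pu l j < j" using assms pu_lt by auto
    then show ?thesis using j by auto
  qed
  then show ?thesis unfolding simple_graph_def UP_alt by auto
qed

lemma leaf_general:
  assumes sg: "simple_graph (V, CE \<union> g ` {l..<Suc m})" and l: "l \<le> m"
    and ce: "\<forall>e\<in>CE. m \<notin> e" and gm: "\<forall>j\<in>{l..<Suc m}. m \<in> g j \<longleftrightarrow> j = m" and gw: "g m = {m, w}" and wm: "w \<noteq> m"
    and mV: "m \<in> V"
  shows "isleaf (V, CE \<union> g ` {l..<Suc m}) m w"
        "del (V, CE \<union> g ` {l..<Suc m}) m = (V - {m}, CE \<union> g ` {l..<m})"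
proof -
  let ?E = "CE \<union> g ` {l..<Suc m}"
  have "{e \<in> ?E. m \<in> e} = {{m,w}}"
  proof
    show "{e \<in> ?E. m \<in> e} \<subseteq> {{m,w}}"
    proof
      fix e assume e: "e \<in> {e \<in> ?E. m \<in> e}"
      then have "e \<notin> CE" using ce by blast
      then obtain j where j: "j \<in> {l..<Suc m}" "e = g j" using e by blast
      then have "j = m" using e gm by blast
      then show "e \<in> {{m,w}}" using j gw by simp
    qed
    have "g m \<in> ?E" using l by simp
    then show "{{m,w}} \<subseteq> {e \<in> ?E. m \<in> e}" using gw by simp
  qed
  then show "isleaf (V, ?E) m w" unfolding isleaf_def using sg wm mV by simp
  have "{e \<in> ?E. m \<notin> e} = CE \<union> g ` {l..<m}"
  proof
    show "{e \<in> ?E. m \<notin> e} \<subseteq> CE \<union> g ` {l..<m}"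
    proof
      fix e assume e: "e \<in> {e \<in> ?E. m \<notin> e}"
      show "e \<in> CE \<union> g ` {l..<m}"
      proof (cases "e \<in> CE")
        case True then show ?thesis by simp
      next
        case False
        then obtain j where j: "j \<in> {l..<Suc m}" "e = g j" using e by blast
        then have "j \<noteq> m" using e gm by blast
        then have "j \<in> {l..<m}" using j by auto
        then show ?thesis using j by blast
      qed
    qed
    show "CE \<union> g ` {l..<m} \<subseteq> {e \<in> ?E. m \<notin> e}"
    proof
      fix e assume e: "e \<in> CE \<union> g ` {l..<m}"
      show "e \<in> {e \<in> ?E. m \<notin> e}"
      proof (cases "e \<in> CE")
        case True then show ?thesis using ce by simp
      next
        case False
        then obtain j where j: "j \<in> {l..<m}" "e = g j" using e by blast
        then have "j \<in> {l..<Suc m}" "j \<noteq> m" by auto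
        then have "m \<notin> e" using gm j(2) by blast
        moreover have "e \<in> ?E" using j by auto
        ultimately show ?thesis by simp
      qed
    qed
  qed
  then show "del (V, ?E) m = (V - {m}, CE \<union> g ` {l..<m})" unfolding del_def by simp
qed

lemma ce_notin: "l \<le> m \<Longrightarrow> \<forall>e\<in>cycle_graph_edges l. m \<notin> e"
  using cge_sub by fastforce

lemma US_leaf:
  assumes "3 \<le> l" "l \<le> m"
  shows "isleaf (US (Suc m) l) m 0" "del (US (Suc m) l) m = US m l"
proof -
  have sg: "simple_graph (({0..<Suc m}, cycle_graph_edges l \<union> (\<lambda>j. {0,j}) ` {l..<Suc m}))"
    using US_simple[of l "Suc m"] assms unfolding US_alt by simp
  have gm: "\<forall>j\<in>{l..<Suc m}. m \<in> {0::nat,j} \<longleftrightarrow> j = m" using assms by auto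
  have gw: "{0,m} = {m, 0::nat}" by auto
  have wm: "(0::nat) \<noteq> m" using assms by simp
  note L = leaf_general[OF sg assms(2) ce_notin[OF assms(2)] gm gw wm]
  show "isleaf (US (Suc m) l) m 0" using L(1) unfolding US_alt by simp
  have "{0..<Suc m} - {m} = {0..<m}" by auto
  then show "del (US (Suc m) l) m = US m l" using L(2) unfolding US_alt by simp
qed

lemma UP_leaf:
  assumes "3 \<le> l" "l \<le> m"
  shows "isleaf (UP (Suc m) l) m (pu l m)" "del (UP (Suc m) l) m = UP m l"
proof -
  have sg: "simple_graph (({0..<Suc m}, cycle_graph_edges l \<union> (\<lambda>j. {pu l j, j}) ` {l..<Suc m}))"
    using UP_simple[of l "Suc m"] assms unfolding UP_alt by simp
  have gm: "\<forall>j\<in>{l..<Suc m}. m \<in> {pu l j, j} \<longleftrightarrow> j = m"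
  proof (intro ballI iffI)
    fix j assume jr: "j \<in> {l..<Suc m}" and "m \<in> {pu l j, j}"
    then have "m = pu l j \<or> m = j" by simp
    then show "j = m"
    proof
      assume h: "m = pu l j"
      show "j = m"
      proof (cases "j = l")
        case True then have "m = 0" using h unfolding pu_def by simp
        then show ?thesis using assms by simp
      next
        case False
        then have "m = j - 1" using h unfolding pu_def by simp
        then show ?thesis using jr assms by auto
      qed
    qed simp
  qed simp
  have gw: "{pu l m, m} = {m, pu l m}" by auto
  have wm: "pu l m \<noteq> m" using pu_lt assms by (metis less_irrefl le_trans numeral_le_iff)
  note L = leaf_general[OF sg assms(2) ce_notin[OF assms(2)] gm gw wm]
  show "isleaf (UP (Suc m) l) m (pu l m)" using L(1) unfolding UP_alt by simp
  have "{0..<Suc m} - {m} = {0..<m}" by auto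
  then show "del (UP (Suc m) l) m = UP m l" using L(2) unfolding UP_alt by simp
qed

lemma c_pos: assumes "3 \<le> l" shows "1 \<le> tc (Cl l) 0"
proof -
  have sg: "simple_graph (Cl l)" by (rule Cl_simple[OF assms])
  have "0 < l" using assms by linarith
  then have "subgraph ({0},{}) (Cl l)" unfolding subgraph_def Cl_def by simp
  then have "({0},{}) \<in> {T \<in> subtrees (Cl l). 0 \<in> fst T}" using single_tree unfolding subtrees_def by simp
  moreover have "finite {T \<in> subtrees (Cl l). 0 \<in> fst T}" using finite_subtrees[OF sg] by simp
  ultimately have "0 < tc (Cl l) 0" unfolding tc_def by (subst card_gt_0_iff) blast
  then show ?thesis by simp
qed

lemma tc_US: assumes "3 \<le> l" "l \<le> m" shows "tc (US m l) 0 = 2^(m-l) * tc (Cl l) 0"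
  using assms(2)
proof (induction m rule: dec_induct)
  case base then show ?case using US_base by simp
next
  case (step m)
  have "0 \<noteq> m" using step assms by linarith
  then have "tc (US (Suc m) l) 0 = tc (US m l) 0 + KK (US m l) 0 0"
    using count_other[OF US_leaf(1)[OF assms(1) step(1)]] US_leaf(2)[OF assms(1) step(1)] by simp
  also have "\<dots> = 2 * tc (US m l) 0" using KK_same by simp
  also have "\<dots> = 2^(Suc m - l) * tc (Cl l) 0" using step by (simp add: Suc_diff_le)
  finally show ?case .
qed

lemma sub_US: assumes "3 \<le> l" "l \<le> m"
  shows "card (subtrees (US (Suc m) l)) = card (subtrees (US m l)) + 1 + 2^(m-l) * tc (Cl l) 0"
  using count_all[OF US_leaf(1)[OF assms]] US_leaf(2)[OF assms] tc_US[OF assms] by simp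

lemma tc_UP: assumes "3 \<le> l" "l \<le> m" shows "tc (UP m l) (pu l m) = (m - l) + tc (Cl l) 0"
  using assms(2)
proof (induction m rule: dec_induct)
  case base then show ?case using UP_base by (simp add: pu_def)
next
  case (step m)
  have "pu l (Suc m) = m" using step unfolding pu_def by simp
  then have "tc (UP (Suc m) l) (pu l (Suc m)) = 1 + tc (UP m l) (pu l m)"
    using count_leaf[OF UP_leaf(1)[OF assms(1) step(1)]] UP_leaf(2)[OF assms(1) step(1)] by simp
  also have "\<dots> = (Suc m - l) + tc (Cl l) 0" using step by (simp add: Suc_diff_le)
  finally show ?case .
qed

lemma sub_UP: assumes "3 \<le> l" "l \<le> m"
  shows "card (subtrees (UP (Suc m) l)) = card (subtrees (UP m l)) + 1 + ((m - l) + tc (Cl l) 0)"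
  using count_all[OF UP_leaf(1)[OF assms]] UP_leaf(2)[OF assms] tc_UP[OF assms] by simp

lemma leaf_step:
  assumes uc: "unicyclic H" and g: "girth H = l" and c: "card (fst H) = Suc m" and lm: "l \<le> m"
  obtains x w where "isleaf H x w" "unicyclic (del H x)" "girth (del H x) = l"
    "card (fst (del H x)) = m" "w \<in> fst (del H x)"
proof -
  have "girth H < card (fst H)" using g c lm by simp
  then obtain x w where xw: "isleaf H x w" "unicyclic (del H x)" "girth (del H x) = girth H"
      "card (fst (del H x)) = card (fst H) - 1"
    using exists_leaf[OF uc] by blast
  have "{x,w} \<in> snd H" "w \<noteq> x" using xw(1) unfolding isleaf_def by auto
  moreover have "\<forall>e\<in>snd H. e \<subseteq> fst H" using uc unfolding unicyclic_def simple_graph_def by simp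
  ultimately have "w \<in> fst (del H x)" unfolding del_def by auto
  then show ?thesis using that xw g c by simp
qed

lemma tc_bounds:
  assumes l3: "3 \<le> l" and lm: "l \<le> m"
  shows "\<forall>(H::'a graph) u. unicyclic H \<and> girth H = l \<and> card (fst H) = m \<and> u \<in> fst H \<longrightarrow>
     (m - l) + tc (Cl l) 0 \<le> tc H u \<and> tc H u \<le> 2^(m-l) * tc (Cl l) 0"
  using lm
proof (induction m rule: dec_induct)
  case base
  show ?case
  proof (intro allI impI)
    fix H :: "'a graph" and u assume h: "unicyclic H \<and> girth H = l \<and> card (fst H) = l \<and> u \<in> fst H"
    then have "tc H u = tc (Cl l) 0" using base_iso[of H u] by simp
    then show "(l - l) + tc (Cl l) 0 \<le> tc H u \<and> tc H u \<le> 2^(l-l) * tc (Cl l) 0" by simp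
  qed
next
  case (step m)
  let ?c = "tc (Cl l) 0"
  have c1: "1 \<le> ?c" by (rule c_pos[OF l3])
  show ?case
  proof (intro allI impI)
    fix H :: "'a graph" and u assume h: "unicyclic H \<and> girth H = l \<and> card (fst H) = Suc m \<and> u \<in> fst H"
    obtain x w where xw: "isleaf H x w" "unicyclic (del H x)" "girth (del H x) = l"
      "card (fst (del H x)) = m" "w \<in> fst (del H x)"
      using leaf_step[of H l m] h step(1) by blast
    let ?H = "del H x"
    have p2: "(2::nat)^(Suc m - l) = 2 * 2^(m-l)" using step(1) by (simp add: Suc_diff_le)
    show "(Suc m - l) + ?c \<le> tc H u \<and> tc H u \<le> 2^(Suc m - l) * ?c"
    proof (cases "u = x")
      case True
      have e: "tc H u = 1 + tc ?H w" using count_leaf[OF xw(1)] True by simp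
      have ih: "(m - l) + ?c \<le> tc ?H w \<and> tc ?H w \<le> 2^(m-l) * ?c" using step(3) xw by blast
      have X: "1 \<le> 2^(m-l) * ?c" using c1 by (simp add: Suc_le_eq)
      have "2^(Suc m - l) * ?c = 2 * (2^(m-l) * ?c)" using p2 by simp
      moreover have "Suc m - l = Suc (m - l)" using step(1) by (simp add: Suc_diff_le)
      ultimately show ?thesis using e ih X by linarith
    next
      case False
      have uH: "u \<in> fst ?H" using h False unfolding del_def by simp
      have e: "tc H u = tc ?H u + KK ?H u w" using count_other[OF xw(1) False] .
      have ih: "(m - l) + ?c \<le> tc ?H u \<and> tc ?H u \<le> 2^(m-l) * ?c" using step(3) xw uH by blast
      have k1: "1 \<le> KK ?H u w" by (rule KK_pos[OF xw(2) uH xw(5)])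
      have k2: "KK ?H u w \<le> tc ?H u"
        by (rule KK_le) (use xw(2) in \<open>simp add: unicyclic_def\<close>)
      have "2^(Suc m - l) * ?c = 2 * (2^(m-l) * ?c)" using p2 by simp
      moreover have "Suc m - l = Suc (m - l)" using step(1) by (simp add: Suc_diff_le)
      ultimately show ?thesis using e ih k1 k2 by linarith
    qed
  qed
qed

lemma sub_bounds:
  assumes l3: "3 \<le> l" and lm: "l \<le> m"
  shows "\<forall>(H::'a graph). unicyclic H \<and> girth H = l \<and> card (fst H) = m \<longrightarrow>
     card (subtrees (UP m l)) \<le> card (subtrees H) \<and> card (subtrees H) \<le> card (subtrees (US m l))"
  using lm
proof (induction m rule: dec_induct)
  case base
  show ?case
  proof (intro allI impI)
    fix H :: "'a graph" assume h: "unicyclic H \<and> girth H = l \<and> card (fst H) = l"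
    have ucH: "unicyclic H" using h by simp
    obtain vs where vs: "distinct vs" "3 \<le> length vs" "set vs \<subseteq> fst H"
      by (rule uc_cycle[OF ucH])
    have "0 < length vs" using vs(2) by linarith
    then have "vs ! 0 \<in> set vs" by (rule nth_mem)
    then have "vs ! 0 \<in> fst H" using vs(3) by blast
    then have "card (subtrees H) = card (subtrees (Cl (girth H)))"
      using base_iso[OF ucH, of "vs ! 0"] h by simp
    then have "card (subtrees H) = card (subtrees (Cl l))" using h by simp
    then show "card (subtrees (UP l l)) \<le> card (subtrees H) \<and> card (subtrees H) \<le> card (subtrees (US l l))"
      using US_base UP_base by simp
  qed
next
  case (step m)
  let ?c = "tc (Cl l) 0"
  show ?case
  proof (intro allI impI)
    fix H :: "'a graph" assume h: "unicyclic H \<and> girth H = l \<and> card (fst H) = Suc m"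
    obtain x w where xw: "isleaf H x w" "unicyclic (del H x)" "girth (del H x) = l"
      "card (fst (del H x)) = m" "w \<in> fst (del H x)"
      using leaf_step[of H l m] h step(1) by blast
    let ?H = "del H x"
    have e: "card (subtrees H) = card (subtrees ?H) + 1 + tc ?H w" by (rule count_all[OF xw(1)])
    have ih: "card (subtrees (UP m l)) \<le> card (subtrees ?H) \<and> card (subtrees ?H) \<le> card (subtrees (US m l))"
      using step(3) xw by blast
    have hh: "unicyclic ?H \<and> girth ?H = l \<and> card (fst ?H) = m \<and> w \<in> fst ?H" using xw by simp
    have tb: "(m - l) + ?c \<le> tc ?H w \<and> tc ?H w \<le> 2^(m-l) * ?c"
      using tc_bounds[OF l3 step(1), rule_format, OF hh] .
    show "card (subtrees (UP (Suc m) l)) \<le> card (subtrees H) \<and> card (subtrees H) \<le> card (subtrees (US (Suc m) l))"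
      using e ih tb sub_US[OF l3 step(1)] sub_UP[OF l3 step(1)] by linarith
  qed
qed

theorem theorem2:
  fixes G :: "'a graph" and n l :: nat
  assumes "3 \<le> l" and "l \<le> n"
    and "unicyclic G" and "card (fst G) = n" and "girth G = l"
  shows "num_subtrees (US n l) \<ge> num_subtrees G \<and> num_subtrees G \<ge> num_subtrees (UP n l)"
proof -
  have "card (subtrees (UP n l)) \<le> card (subtrees G) \<and> card (subtrees G) \<le> card (subtrees (US n l))"
    using sub_bounds[OF assms(1,2)] assms(3,4,5) by blast
  then show ?thesis unfolding num_subtrees_def subtrees_def by simp
qed

end
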